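(* Let $0<p_i<1$ and $r_i\ge 0$ for $i=1,\dots,n$, indexed so that $r_1/p_1\ge r_2/p_2\ge\dots\ge r_n/p_n$. For $S\subseteq\{1,\dots,n\}$ let $f(S)=\sum_{i\in S} r_i+\prod_{i\in S}(1-p_i)$. Then the maximum of $f(S)$ over all subsets $S$ is attained at $S=\{1,2,\dots,k\}$ for some $0\le k\le n$. *)

theory Defs
  imports Complex_Main
begin

definition fval :: "(nat \<Rightarrow> real) \<Rightarrow> (nat \<Rightarrow> real) \<Rightarrow> nat set \<Rightarrow> real" where
  "fval p r S = (\<Sum>i\<in>S. r i) + (\<Prod>i\<in>S. (1 - p i))"

end

theory Submission
  imports Defs
begin

theorem claim1:
  fixes n :: nat and p r :: "nat \<Rightarrow> real"
  assumes p_pos: "\<And>i. i \<in> {1..n} \<Longrightarrow> 0 < p i"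
    and p_lt1: "\<And>i. i \<in> {1..n} \<Longrightarrow> p i < 1"
    and r_nonneg: "\<And>i. i \<in> {1..n} \<Longrightarrow> 0 \<le> r i"
    and sorted: "\<And>i j. i \<in> {1..n} \<Longrightarrow> j \<in> {1..n} \<Longrightarrow> i \<le> j \<Longrightarrow> r j / p j \<le> r i / p i"
  shows "\<exists>k\<le>n. \<forall>S. S \<subseteq> {1..n} \<longrightarrow> fval p r S \<le> fval p r {1..k}"
proof -
  define F where "F = Pow {1..n}"
  have finF: "finite F" unfolding F_def by simp
  have neF: "F \<noteq> {}" unfolding F_def by auto
  define M where "M = Max (fval p r ` F)"
  have leM: "fval p r T \<le> M" if "T \<subseteq> {1..n}" for T
    unfolding M_def using finF that by (auto simp: F_def)
  define Opt where "Opt = {S \<in> F. fval p r S = M}"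
  have finOpt: "finite Opt" using finF unfolding Opt_def by simp
  have neOpt: "Opt \<noteq> {}"
  proof -
    have "M \<in> fval p r ` F" unfolding M_def using finF neF by (intro Max_in) auto
    thus ?thesis unfolding Opt_def by auto
  qed
  have "Max (card ` Opt) \<in> card ` Opt" using finOpt neOpt by (intro Max_in) auto
  then obtain S where SOpt: "S \<in> Opt" and Sc: "card S = Max (card ` Opt)" by auto
  have Smax: "card T \<le> card S" if "T \<in> Opt" for T
    unfolding Sc using finOpt that by (intro Max_ge) auto
  have Ssub: "S \<subseteq> {1..n}" and SM: "fval p r S = M" using SOpt by (auto simp: Opt_def F_def)
  have finS: "finite S" using Ssub finite_subset by blast
  have closed: "i \<in> S" if jS: "j \<in> S" and i1: "1 \<le> i" and ij: "i < j" for i j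
  proof (rule ccontr)
    assume iS: "i \<notin> S"
    have jn: "j \<in> {1..n}" using jS Ssub by auto
    have iin: "i \<in> {1..n}" using i1 ij jn by auto
    define T where "T = S - {j}"
    define Q where "Q = (\<Prod>k\<in>T. (1 - p k))"
    define R where "R = (\<Sum>k\<in>T. r k)"
    have Tsub: "T \<subseteq> {1..n}" using Ssub T_def by auto
    have Q0: "0 \<le> Q" unfolding Q_def using Tsub p_lt1
      by (intro prod_nonneg) (fastforce)
    have fS: "fval p r S = R + r j + (1 - p j) * Q"
      unfolding fval_def R_def Q_def T_def
      using finS jS by (simp add: sum.remove prod.remove)
    have fT: "fval p r T = R + Q" unfolding fval_def R_def Q_def by simp
    have "fval p r T \<le> M" using leM Tsub by blast
    hence "Q * p j \<le> r j" using fS fT SM by (simp add: algebra_simps)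
    hence "Q \<le> r j / p j" using p_pos[OF jn] by (simp add: pos_le_divide_eq)
    also have "\<dots> \<le> r i / p i" using sorted[OF iin jn] ij by simp
    finally have "Q * p i \<le> r i" using p_pos[OF iin] by (simp add: pos_le_divide_eq)
    moreover have "(1 - p j) * Q * p i \<le> Q * p i"
      using Q0 p_pos[OF iin] p_pos[OF jn] by (intro mult_right_mono) (auto simp: algebra_simps)
    ultimately have le: "(1 - p j) * Q * p i \<le> r i" by linarith
    have fiS: "fval p r (insert i S) = fval p r S + r i - p i * ((1 - p j) * Q)"
    proof -
      have A: "(\<Prod>k\<in>S. (1 - p k)) = (1 - p j) * Q"
        unfolding Q_def T_def using finS jS by (simp add: prod.remove)
      have "fval p r (insert i S) = fval p r S + r i - p i * (\<Prod>k\<in>S. (1 - p k))"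
        proof -
        have "fval p r (insert i S) = r i + (\<Sum>k\<in>S. r k) + (1 - p i) * (\<Prod>k\<in>S. (1 - p k))"
          unfolding fval_def using finS iS by simp
        thus ?thesis unfolding fval_def by (simp only: left_diff_distrib mult_1)
      qed
      thus ?thesis unfolding A .
    qed
    have "p i * ((1 - p j) * Q) = (1 - p j) * Q * p i" by (rule mult.commute)
    hence "fval p r (insert i S) \<ge> M" using fiS le SM by linarith
    moreover have "insert i S \<subseteq> {1..n}" using Ssub iin by auto
    ultimately have "insert i S \<in> Opt" using leM[of "insert i S"] unfolding Opt_def F_def
      by (simp only: mem_Collect_eq Pow_iff) (meson antisym)
    hence "card (insert i S) \<le> card S" by (rule Smax)
    thus False using finS iS by simp
  qed
  define k where "k = (if S = {} then 0 else Max S)"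
  have Seq: "S = {1..k}"
  proof (cases "S = {}")
    case True thus ?thesis by (simp add: k_def)
  next
    case False
    have MS: "Max S \<in> S" using False finS by simp
    show ?thesis
    proof
      show "S \<subseteq> {1..k}" using Ssub finS False by (auto simp: k_def)
      show "{1..k} \<subseteq> S"
      proof
        fix x assume "x \<in> {1..k}"
        hence "1 \<le> x" "x \<le> Max S" using False by (auto simp: k_def)
        thus "x \<in> S" using closed[OF MS] MS by (cases "x = Max S") auto
      qed
    qed
  qed
  have kn: "k \<le> n" using Ssub finS by (auto simp: k_def)
  show ?thesis using kn leM SM Seq by auto
qed

end
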